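(* In the setting described in the context, assume A1, A2 and A3. If there exists $k^\star\in\{1,\dots,K\}$ with $\inf_{\mathbf w\in\mathcal W^*}w_{k^\star}>\frac12$, then $\liminf_{n\to\infty}\Pr\big(Y\in\mathcal C_{\mathrm{comb}}(\mathbf X;\mathcal D_n)\big)\ge1-\alpha$.
   Context: Setting: fix $K\ge2$ and $\alpha\in(0,1)$. For each sample size $n$, on a common probability space there are a random data set $\mathcal D_n$ and a random test pair $(\mathbf X,Y)$ with $\mathbf X\in\mathcal X\subseteq\mathbb R^p$, $Y\in\mathbb R$. For each $k\in\{1,\dots,K\}$ there is a random prediction set $\mathcal C_k(\mathbf X;\mathcal D_n)\subseteq\mathbb R$, determined by $\mathcal D_n$ and $\mathbf X$, such that the events $\{Y\in\mathcal C_k(\mathbf X;\mathcal D_n)\}$ are measurable. Let $\Delta^{K-1}=\{\mathbf w\in[0,1]^K:w_k\ge0,\sum_k w_k=1\}$ and let $\widehat{\mathbf w}_n=(\widehat w_{n,1},\dots,\widehat w_{n,K})$ be a $\sigma(\mathcal D_n)$-measurable random vector in $\Delta^{K-1}$. Let $\mathcal W^*\subseteq\Delta^{K-1}$ be a nonempty closed convex set; $\|\cdot\|$ is the Euclidean norm. A1: for every $n$ and every $k$, $\Pr(Y\notin\mathcal C_k(\mathbf X;\mathcal D_n)\mid\mathcal D_n)\le\alpha$ almost surely. A2: $\inf_{\mathbf w\in\mathcal W^*}\|\widehat{\mathbf w}_n-\mathbf w\|\to0$ in probability as $n\to\infty$. A3: $\mathcal C_{\mathrm{comb}}(\mathbf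 X;\mathcal D_n):=\{y\in\mathbb R:\sum_{k=1}^K\widehat w_{n,k}\mathbf 1\{y\in\mathcal C_k(\mathbf X;\mathcal D_n)\}>1/2\}$. *)

theory Defs
  imports "HOL-Analysis.Analysis" "HOL-Probability.Probability"
begin

definition prob_simplex :: "(real^'K) set" where
  "prob_simplex = {w. (\<forall>k. 0 \<le> w $ k) \<and> (\<Sum>k\<in>UNIV. w $ k) = 1}"

definition comb_set :: "real^'K \<Rightarrow> ('K \<Rightarrow> real set) \<Rightarrow> real set" where
  "comb_set w C = {y. (\<Sum>k\<in>UNIV. w $ k * (if y \<in> C k then 1 else 0)) > 1/2}"

end

theory Submission
  imports Defs
begin

lemma subalg_vimage:
  assumes "D \<in> measurable M N"
  shows "subalgebra M (vimage_algebra (space M) D N)"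
proof -
  have m: "(\<lambda>x. x) \<in> measurable M (vimage_algebra (space M) D N)"
    by (rule measurable_vimage_algebra2) (use assms in auto)
  have "A \<in> sets M" if "A \<in> sets (vimage_algebra (space M) D N)" for A
  proof -
    have "(\<lambda>x. x) -` A \<inter> space M \<in> sets M" using measurable_sets[OF m that] .
    moreover have "A \<subseteq> space M" using sets.sets_into_space[OF that] by simp
    ultimately show ?thesis by (simp add: Int_absorb2)
  qed
  then show ?thesis unfolding subalgebra_def by auto
qed

lemma infdist_small:
  assumes "A \<noteq> {}" "infdist x A < e"
  shows "\<exists>a\<in>A. dist x a < e"
  using assms by (simp add: infdist_notempty cInf_less_iff)

theorem theorem2:
  fixes M :: "'a measure"
    and N :: "nat \<Rightarrow> 'd measure"
    and D :: "nat \<Rightarrow> 'a \<Rightarrow> 'd"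
    and X :: "'a \<Rightarrow> 'x"
    and Y :: "'a \<Rightarrow> real"
    and C :: "nat \<Rightarrow> 'K::finite \<Rightarrow> 'd \<Rightarrow> 'x \<Rightarrow> real set"
    and what :: "nat \<Rightarrow> 'a \<Rightarrow> real^'K"
    and Wstar :: "(real^'K) set"
    and \<alpha> :: real
  assumes "prob_space M"
    and K2: "CARD('K) \<ge> 2"
    and alpha: "0 < \<alpha>" "\<alpha> < 1"
    and D_meas: "\<And>n. D n \<in> measurable M (N n)"
    and C_meas: "\<And>n k. {\<omega> \<in> space M. Y \<omega> \<in> C n k (D n \<omega>) (X \<omega>)} \<in> sets M"
    and what_meas: "\<And>n. what n \<in> borel_measurable (vimage_algebra (space M) (D n) (N n))"
    and what_simplex: "\<And>n \<omega>. \<omega> \<in> space M \<Longrightarrow> what n \<omega> \<in> prob_simplex"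
    and W_ne: "Wstar \<noteq> {}" and W_closed: "closed Wstar" and W_convex: "convex Wstar"
    and W_sub: "Wstar \<subseteq> prob_simplex"
    and A1: "\<And>n k. AE \<omega> in M.
              real_cond_exp M (vimage_algebra (space M) (D n) (N n))
                (indicator {\<omega> \<in> space M. Y \<omega> \<notin> C n k (D n \<omega>) (X \<omega>)}) \<omega> \<le> \<alpha>"
    and A2: "\<And>\<epsilon>. \<epsilon> > 0 \<Longrightarrow>
              (\<lambda>n. measure M {\<omega> \<in> space M. infdist (what n \<omega>) Wstar > \<epsilon>}) \<longlonglongrightarrow> 0"
    and kstar: "\<exists>k. Inf ((\<lambda>w. w $ k) ` Wstar) > 1/2"
  shows "liminf (\<lambda>n. ereal (measure M
            {\<omega> \<in> space M. Y \<omega> \<in> comb_set (what n \<omega>) (\<lambda>k. C n k (D n \<omega>) (X \<omega>))}))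
         \<ge> ereal (1 - \<alpha>)"
proof -
  interpret P: prob_space M by fact
  obtain ks where ks: "Inf ((\<lambda>w. w $ ks) ` Wstar) > 1/2" using kstar by blast
  define c where "c = Inf ((\<lambda>w. w $ ks) ` Wstar)"
  define e where "e = (c - 1/2) / 2"
  have e: "e > 0" using ks unfolding e_def c_def by simp
  have bdd: "bdd_below ((\<lambda>w. w $ ks) ` Wstar)"
    using W_sub unfolding prob_simplex_def by (auto intro!: bdd_belowI[where m=0])
  have cle: "c \<le> w $ ks" if "w \<in> Wstar" for w
    unfolding c_def using bdd that by (auto intro: cInf_lower)
  define S where "S n = {\<omega> \<in> space M. Y \<omega> \<in> C n ks (D n \<omega>) (X \<omega>)}" for n
  define B where "B n = {\<omega> \<in> space M. infdist (what n \<omega>) Wstar > e}" for n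
  define G where "G n = {\<omega> \<in> space M. Y \<omega> \<in> comb_set (what n \<omega>) (\<lambda>k. C n k (D n \<omega>) (X \<omega>))}" for n
  have subalg: "subalgebra M (vimage_algebra (space M) (D n) (N n))" for n
    by (rule subalg_vimage[OF D_meas])
  have wm: "what n \<in> borel_measurable M" for n
    by (rule measurable_from_subalg[OF subalg what_meas])
  have Sm: "S n \<in> sets M" for n unfolding S_def by (rule C_meas)
  have Bm: "B n \<in> sets M" for n
  proof -
    have "(\<lambda>x. infdist x Wstar) \<in> borel_measurable borel"
      by (intro borel_measurable_continuous_onI continuous_intros)
    then have "(\<lambda>\<omega>. infdist (what n \<omega>) Wstar) \<in> borel_measurable M"
      using measurable_compose[OF wm] by blast
    then show ?thesis unfolding B_def by measurable
  qed
  have Gm: "G n \<in> sets M" for n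
  proof -
    define Sk where "Sk k = {\<omega> \<in> space M. Y \<omega> \<in> C n k (D n \<omega>) (X \<omega>)}" for k
    define f where "f \<omega> = (\<Sum>k\<in>UNIV. what n \<omega> $ k * indicator (Sk k) \<omega>)" for \<omega>
    have comp: "(\<lambda>\<omega>. what n \<omega> $ k) \<in> borel_measurable M" for k
    proof -
      have "(\<lambda>x::real^'K. x $ k) \<in> borel_measurable borel"
        by (intro borel_measurable_continuous_onI continuous_intros)
      then show ?thesis using measurable_compose[OF wm] by blast
    qed
    have Skm: "Sk k \<in> sets M" for k unfolding Sk_def by (rule C_meas)
    have "f \<in> borel_measurable M" unfolding f_def
      using comp Skm by measurable
    then have "{\<omega> \<in> space M. f \<omega> > 1/2} \<in> sets M" by measurable
    moreover have "G n = {\<omega> \<in> space M. f \<omega> > 1/2}"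
    proof -
      have "f \<omega> = (\<Sum>k\<in>UNIV. what n \<omega> $ k * (if Y \<omega> \<in> C n k (D n \<omega>) (X \<omega>) then 1 else 0))"
        if "\<omega> \<in> space M" for \<omega>
        unfolding f_def Sk_def by (rule sum.cong) (use that in \<open>auto simp: indicator_def\<close>)
      then show ?thesis unfolding G_def comb_set_def by auto
    qed
    ultimately show ?thesis by simp
  qed
  have PS: "measure M (S n) \<ge> 1 - \<alpha>" for n
  proof -
    define F where "F = vimage_algebra (space M) (D n) (N n)"
    define T where "T = {\<omega> \<in> space M. Y \<omega> \<notin> C n ks (D n \<omega>) (X \<omega>)}"
    interpret FS: finite_measure_subalgebra M F
      unfolding finite_measure_subalgebra_def finite_measure_subalgebra_axioms_def F_def
      using subalg P.finite_measure_axioms by blast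
    have T_eq: "T = space M - S n" unfolding T_def S_def by auto
    have Tm: "T \<in> sets M" using T_eq Sm by auto
    have intT: "integrable M (indicator T :: 'a \<Rightarrow> real)" using Tm by (simp add: P.emeasure_eq_measure)
    have "measure M T = integral\<^sup>L M (indicator T)" using Tm by simp
    also have "\<dots> = integral\<^sup>L M (real_cond_exp M F (indicator T))"
      using FS.real_cond_exp_int(2)[OF intT] by simp
    also have "\<dots> \<le> integral\<^sup>L M (\<lambda>_. \<alpha>)"
      apply (rule integral_mono_AE)
      using FS.real_cond_exp_int(1)[OF intT] A1[of n ks] unfolding F_def T_def by auto
    also have "\<dots> = \<alpha>" by (simp add: P.prob_space)
    finally have "measure M T \<le> \<alpha>" .
    moreover have "measure M T = 1 - measure M (S n)"
      using T_eq Sm P.prob_compl by simp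
    ultimately show ?thesis by simp
  qed
  have SGB: "S n \<subseteq> G n \<union> B n" for n
  proof
    fix \<omega> assume "\<omega> \<in> S n"
    then have om: "\<omega> \<in> space M" and Yin: "Y \<omega> \<in> C n ks (D n \<omega>) (X \<omega>)" unfolding S_def by auto
    show "\<omega> \<in> G n \<union> B n"
    proof (cases "\<omega> \<in> B n")
      case False
      then have "infdist (what n \<omega>) Wstar < c - 1/2" using om e unfolding B_def e_def by auto
      then obtain w where w: "w \<in> Wstar" "dist (what n \<omega>) w < c - 1/2"
        using infdist_small[OF W_ne] by blast
      have "\<bar>what n \<omega> $ ks - w $ ks\<bar> \<le> dist (what n \<omega>) w"
        by (metis dist_real_def dist_vec_nth_le)
      then have big: "what n \<omega> $ ks > 1/2" using w cle[OF w(1)] by linarith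
      have nn: "\<forall>k. 0 \<le> what n \<omega> $ k" using what_simplex[OF om] unfolding prob_simplex_def by auto
      have "what n \<omega> $ ks * (if Y \<omega> \<in> C n ks (D n \<omega>) (X \<omega>) then 1 else 0)
          \<le> (\<Sum>k\<in>UNIV. what n \<omega> $ k * (if Y \<omega> \<in> C n k (D n \<omega>) (X \<omega>) then 1 else 0))"
        by (rule member_le_sum) (use nn in auto)
      then have "\<omega> \<in> G n" using big Yin om unfolding G_def comb_set_def by auto
      then show ?thesis by simp
    qed simp
  qed
  have low: "1 - \<alpha> - measure M (B n) \<le> measure M (G n)" for n
  proof -
    have "measure M (S n) \<le> measure M (G n \<union> B n)"
      using SGB Gm Bm by (intro P.finite_measure_mono) auto
    also have "\<dots> \<le> measure M (G n) + measure M (B n)"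
      using Gm Bm by (rule measure_Un_le)
    finally show ?thesis using PS[of n] by simp
  qed
  have lim: "(\<lambda>n. ereal (1 - \<alpha> - measure M (B n))) \<longlonglongrightarrow> ereal (1 - \<alpha>)"
  proof -
    have "(\<lambda>n. 1 - \<alpha> - measure M (B n)) \<longlonglongrightarrow> 1 - \<alpha> - 0"
      using A2[OF e] unfolding B_def by (intro tendsto_intros)
    then show ?thesis by (simp add: tendsto_ereal)
  qed
  have "ereal (1 - \<alpha>) = liminf (\<lambda>n. ereal (1 - \<alpha> - measure M (B n)))"
    using lim_imp_Liminf[OF trivial_limit_sequentially lim] by simp
  also have "\<dots> \<le> liminf (\<lambda>n. ereal (measure M (G n)))"
    by (intro Liminf_mono) (use low in auto)
  finally show ?thesis unfolding G_def .
qed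

end
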